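(* For all real $\alpha,\beta$, every non-negative integer $r$ and all integers $0\le k\le n$, \[ S_{r\alpha,\beta}(n,k)=B^{(r)}_{n+r,k+r}\big(\langle-\beta\rangle_j;\langle-\alpha\rangle_{j-1}\big), \] i.e. the partial $r$-Bell polynomial evaluated at $a_j=\langle-\beta\rangle_j$, $b_j=\langle-\alpha\rangle_{j-1}$ ($j\ge1$). Consequently, when $\beta\neq0$, $P_n^{(r\alpha,\beta)}(x)=\sum_{k=0}^{n}B^{(r)}_{n+r,k+r}\big(\langle-\beta\rangle_j;\langle-\alpha\rangle_{j-1}\big)x^k$.
   Context: For real $a$ and integer $n\ge 1$, $\langle a\rangle_n:=a(a+1)\cdots(a+n-1)$ and $\langle a\rangle_0:=1$. For real $\alpha,\beta$ and integers $0\le k\le n$, $S_{\alpha,\beta}(n,k):=\frac{1}{k!}\sum_{j=0}^{k}(-1)^{k-j}\binom{k}{j}\langle-\alpha-\beta j\rangle_n$. For real $\alpha,\beta$ with $\beta\neq0$, $P_n^{(\alpha,\beta)}(x)$ are defined by $\sum_{n\ge0}P_n^{(\alpha,\beta)}(x)\frac{t^n}{n!}=(1-t)^{\alpha}\exp\big(x((1-t)^{\beta}-1)\big)$. For sequences $(a_j)_{j\ge1},(b_j)_{j\ge1}$ and integers $r,k\ge0$, the partial $r$-Bell polynomials $B^{(r)}_{n+r,k+r}(a_j;b_j)$, $n\ge k$, are defined by $\sum_{n\ge k}B^{(r)}_{n+r,k+r}(a_j;b_j)\frac{t^n}{n!}=\frac{1}{k!}\Big(\sum_{j\ge1}a_j\frac{t^j}{j!}\Big)^k\Big(\sum_{j\ge0}b_{j+1}\frac{t^j}{j!}\Big)^r$.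 *)

theory Defs
  imports "HOL-Computational_Algebra.Formal_Power_Series"
begin

definition S_ab :: "real \<Rightarrow> real \<Rightarrow> nat \<Rightarrow> nat \<Rightarrow> real" where
  "S_ab \<alpha> \<beta> n k = (1 / fact k) *
     (\<Sum>j=0..k. (-1) ^ (k - j) * of_nat (k choose j) * pochhammer (- \<alpha> - \<beta> * of_nat j) n)"

text \<open>Partial r-Bell polynomial: rBell r n k a b is B^(r)_{n+r,k+r}(a_j; b_j), defined via the
  exponential generating function; the sequences are indexed from 1 (a 0, b 0 are unused).\<close>

definition rBell :: "nat \<Rightarrow> nat \<Rightarrow> nat \<Rightarrow> (nat \<Rightarrow> real) \<Rightarrow> (nat \<Rightarrow> real) \<Rightarrow> real" where
  "rBell r n k a b = fact n * fps_nth
     (fps_const (1 / fact k)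
      * (Abs_fps (\<lambda>j. if j = 0 then 0 else a j / fact j)) ^ k
      * (Abs_fps (\<lambda>j. b (j + 1) / fact j)) ^ r) n"

text \<open>P_n^{(alpha,beta)}(x) via the formal power series (1-t)^alpha exp(x((1-t)^beta - 1)).\<close>

definition Pab :: "real \<Rightarrow> real \<Rightarrow> nat \<Rightarrow> real \<Rightarrow> real" where
  "Pab \<alpha> \<beta> n x = fact n * fps_nth
     (fps_compose (fps_binomial \<alpha>) (- fps_X)
      * fps_compose (fps_exp x) (fps_compose (fps_binomial \<beta>) (- fps_X) - 1)) n"

end

theory Submission
  imports Defs
begin
unbundle fps_syntax

definition EE :: "real \<Rightarrow> real fps" where
  "EE g = fps_compose (fps_binomial g) (- fps_X)"

lemma EE_nth: "EE g $ n = pochhammer (- g) n / fact n"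
  unfolding EE_def fps_compose_uminus' by (simp add: gbinomial_pochhammer power_mult_distrib[symmetric])

lemma EE_add: "EE (a + b) = EE a * EE b"
  unfolding EE_def fps_binomial_add_mult
  by (rule fps_compose_mult_distrib) simp

lemma EE_0: "EE 0 = 1"
  unfolding EE_def by simp

lemma EE_nat: "EE (of_nat r * a) = EE a ^ r"
proof (induction r)
  case 0 then show ?case by (simp add: EE_0)
next
  case (Suc r)
  have "of_nat (Suc r) * a = a + of_nat r * a" by (simp add: algebra_simps)
  then show ?case using Suc by (simp add: EE_add)
qed

lemma EE_nat': "EE (a * of_nat r) = EE a ^ r"
  using EE_nat[of r a] by (simp add: mult.commute)

lemma B_eq: "Abs_fps (\<lambda>j. pochhammer (- \<alpha>) (j + 1 - 1) / fact j) = EE \<alpha>"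
  by (simp add: fps_eq_iff EE_nth)

lemma A_eq: "Abs_fps (\<lambda>j. if j = 0 then 0 else pochhammer (- \<beta>) j / fact j) = EE \<beta> - 1"
  by (simp add: fps_eq_iff EE_nth)

lemma rBell_eq: "rBell r n k (\<lambda>j. pochhammer (- \<beta>) j) (\<lambda>j. pochhammer (- \<alpha>) (j - 1))
   = fact n * (fps_const (1 / fact k) * (EE \<beta> - 1) ^ k * EE \<alpha> ^ r) $ n"
  unfolding rBell_def using B_eq[of \<alpha>] A_eq[of \<beta>] by simp

lemma rBell_eq2: "rBell r n k (\<lambda>j. pochhammer (- \<beta>) j) (\<lambda>j. pochhammer (- \<alpha>) (j - 1))
   = fact n / fact k * ((EE \<beta> - 1) ^ k * EE \<alpha> ^ r) $ n"
  unfolding rBell_eq by (simp add: mult.assoc)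

lemma part1: "S_ab (of_nat r * \<alpha>) \<beta> n k
   = rBell r n k (\<lambda>j. pochhammer (- \<beta>) j) (\<lambda>j. pochhammer (- \<alpha>) (j - 1))"
proof -
  have bin: "(EE \<beta> - 1) ^ k = (\<Sum>j=0..k. of_nat (k choose j) * EE \<beta> ^ j * (-1) ^ (k - j))"
    using binomial_ring[of "EE \<beta>" "-1" k] by (simp add: atLeast0AtMost)
  have p: "pochhammer (- (of_nat r * \<alpha>) - \<beta> * of_nat j) n = fact n * (EE \<alpha> ^ r * EE \<beta> ^ j) $ n" for j
  proof -
    have "EE (of_nat r * \<alpha> + \<beta> * of_nat j) $ n = pochhammer (- (of_nat r * \<alpha>) - \<beta> * of_nat j) n / fact n"
      by (simp add: EE_nth)
    then show ?thesis by (simp add: EE_add EE_nat EE_nat')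
  qed
  have "rBell r n k (\<lambda>j. pochhammer (- \<beta>) j) (\<lambda>j. pochhammer (- \<alpha>) (j - 1))
     = fact n / fact k * ((\<Sum>j=0..k. of_nat (k choose j) * EE \<beta> ^ j * (-1) ^ (k - j)) * EE \<alpha> ^ r) $ n"
    unfolding rBell_eq bin by (simp add: mult.assoc)
  also have "(\<Sum>j=0..k. of_nat (k choose j) * EE \<beta> ^ j * (-1) ^ (k - j)) * EE \<alpha> ^ r
      = (\<Sum>j=0..k. fps_const ((-1) ^ (k - j) * of_nat (k choose j)) * (EE \<alpha> ^ r * EE \<beta> ^ j))"
  proof -
    have m1: "(-1::real fps) ^ m = fps_const ((-1) ^ m)" for m
      by (metis fps_const_neg fps_const_1_eq_1 fps_const_power)
    have m2: "(of_nat c :: real fps) = fps_const (of_nat c)" for c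
      by (simp add: fps_of_nat)
    show ?thesis unfolding sum_distrib_right
      by (intro sum.cong refl) (simp add: m1 m2 mult_ac flip: fps_const_mult)
  qed
  also have "fact n / fact k * (\<Sum>j=0..k. fps_const ((-1) ^ (k - j) * of_nat (k choose j)) * (EE \<alpha> ^ r * EE \<beta> ^ j)) $ n
     = fact n / fact k * (\<Sum>j=0..k. (-1) ^ (k - j) * of_nat (k choose j) * (EE \<alpha> ^ r * EE \<beta> ^ j) $ n)"
    by (simp add: fps_sum_nth)
  also have "\<dots> = S_ab (of_nat r * \<alpha>) \<beta> n k"
    unfolding S_ab_def p by (simp add: sum_distrib_left mult_ac)
  finally show ?thesis by simp
qed

lemma mult_compose_nth:
  fixes f a b :: "real fps"
  assumes b0: "b $ 0 = 0"
  shows "(f * (a oo b)) $ n = (\<Sum>j=0..n. a $ j * (f * b ^ j) $ n)"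
proof -
  have g: "(a oo b) $ m = (\<Sum>j=0..n. a $ j * (b ^ j $ m))" if "m \<le> n" for m
    unfolding fps_compose_nth using that
    by (intro sum.mono_neutral_left) (auto simp: startsby_zero_power_prefix[OF b0])
  have "(f * (a oo b)) $ n = (\<Sum>i=0..n. f $ i * (a oo b) $ (n - i))"
    by (simp add: fps_mult_nth)
  also have "\<dots> = (\<Sum>i=0..n. f $ i * (\<Sum>j=0..n. a $ j * (b ^ j $ (n - i))))"
    by (intro sum.cong refl) (simp add: g)
  also have "\<dots> = (\<Sum>j=0..n. a $ j * (\<Sum>i=0..n. f $ i * (b ^ j $ (n - i))))"
    unfolding sum_distrib_left by (subst sum.swap) (simp add: mult_ac)
  also have "\<dots> = (\<Sum>j=0..n. a $ j * (f * b ^ j) $ n)"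
    by (simp add: fps_mult_nth)
  finally show ?thesis .
qed

lemma part2: "Pab (of_nat r * \<alpha>) \<beta> n x
   = (\<Sum>i=0..n. rBell r n i (\<lambda>j. pochhammer (- \<beta>) j) (\<lambda>j. pochhammer (- \<alpha>) (j - 1)) * x ^ i)"
proof -
  have "Pab (of_nat r * \<alpha>) \<beta> n x = fact n * (EE \<alpha> ^ r * (fps_exp x oo (EE \<beta> - 1))) $ n"
    unfolding Pab_def EE_nat[symmetric] by (simp add: EE_def)
  also have "\<dots> = fact n * (\<Sum>j=0..n. x ^ j / fact j * (EE \<alpha> ^ r * (EE \<beta> - 1) ^ j) $ n)"
    by (subst mult_compose_nth) (simp_all add: EE_nth)
  also have "\<dots> = (\<Sum>i=0..n. rBell r n i (\<lambda>j. pochhammer (- \<beta>) j) (\<lambda>j. pochhammer (- \<alpha>) (j - 1)) * x ^ i)"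
    unfolding rBell_eq2 sum_distrib_left by (intro sum.cong refl) (simp add: mult_ac)
  finally show ?thesis .
qed

theorem proposition4:
  fixes \<alpha> \<beta> :: real and r n k :: nat
  assumes "k \<le> n"
  shows "S_ab (of_nat r * \<alpha>) \<beta> n k
           = rBell r n k (\<lambda>j. pochhammer (- \<beta>) j) (\<lambda>j. pochhammer (- \<alpha>) (j - 1))
         \<and> (\<beta> \<noteq> 0 \<longrightarrow> (\<forall>x::real. Pab (of_nat r * \<alpha>) \<beta> n x
           = (\<Sum>i=0..n. rBell r n i (\<lambda>j. pochhammer (- \<beta>) j) (\<lambda>j. pochhammer (- \<alpha>) (j - 1)) * x ^ i)))"
  using part1 part2 by blast

end
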